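(* Let $(M,\varphi,\xi_\alpha,\eta^\alpha,g)$ be an indefinite $\mathcal{S}$-manifold, $\varepsilon=\sum_{\alpha=1}^r\varepsilon_\alpha$, and $P(X,Y;Z,W)=\Phi(X,Z)g(Y,W)-\Phi(X,W)g(Y,Z)-\Phi(Y,Z)g(X,W)+\Phi(Y,W)g(X,Z)$. Let $T$ and $S$ be $(0,4)$-tensor fields on $M$ such that, for $U\in\{T,S\}$: (i) $U(X,Y,Z,W)=-U(Y,X,Z,W)$ for all vector fields $X,Y,Z,W$; (ii) $U(X,Y,Z,W)=-U(X,Y,W,Z)$ for all $X,Y,Z,W$; (iii) $U(X,Y,Z,W)=U(Z,W,X,Y)$ for all $X,Y,Z,W$; (iv) $U(X,Y,Z,W)+U(X,Z,W,Y)+U(X,W,Y,Z)=0$ for all $X,Y,Z,W$; (v) $U(X,Y,\varphi Z,W)+U(X,Y,Z,\varphi W)=\varepsilon P(X,Y;Z,W)$ for all $X,Y,Z,W\in\Gamma(\mathfrak{D})$; and moreover, for all $X,Y\in\Gamma(\mathfrak{D})$ and all $\alpha,\beta,\gamma,\delta\in\{1,\dots,r\}$: (vi)(a) $T(X,\xi_\alpha,X,Y)=S(X,\xi_\alpha,X,Y)$; (b) $T(\xi_\alpha,X,\xi_\beta,Y)=S(\xi_\alpha,X,\xi_\beta,Y)$; (c) $T(\xi_\alpha,X,\xi_\beta,\xi_\gamma)=S(\xi_\alpha,X,\xi_\beta,\xi_\gamma)$; (d) $T(\xi_\alpha,\xi_\beta,\xi_\gamma,\xi_\delta)=S(\xi_\alpha,\xi_\beta,\xi_\gamma,\xi_\delta)$.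 If $T(X,\varphi X,X,\varphi X)=S(X,\varphi X,X,\varphi X)$ for every non-lightlike vector field $X\in\Gamma(\mathfrak{D})$, then $T=S$.
   Context: Let $M$ be a smooth manifold of dimension $2n+r$. An indefinite metric $g.f.f$-structure $(\varphi,\xi_\alpha,\eta^\alpha,g)$, $\alpha=1,\dots,r$, on $M$ consists of a $(1,1)$-tensor field $\varphi$ of constant rank with $\varphi^3+\varphi=0$, vector fields $\xi_1,\dots,\xi_r$, $1$-forms $\eta^1,\dots,\eta^r$ and a semi-Riemannian metric $g$ of index $\nu$, $0<\nu<2n+r$, such that $\varphi^2=-I+\sum_\alpha\eta^\alpha\otimes\xi_\alpha$, $\eta^\alpha(\xi_\beta)=\delta^\alpha_\beta$, $g(\varphi X,\varphi Y)=g(X,Y)-\sum_\alpha\varepsilon_\alpha\eta^\alpha(X)\eta^\alpha(Y)$ and $\varepsilon_\alpha g(X,\xi_\alpha)=\eta^\alpha(X)$ for all $X,Y$, where $\varepsilon_\alpha=g(\xi_\alpha,\xi_\alpha)\in\{1,-1\}$. $\mathfrak{D}=\operatorname{Im}\varphi$. The fundamental $2$-form is $\Phi(X,Y)=g(X,\varphi Y)$; exterior derivative convention $d\omega(X,Y)=\tfrac12(X(\omega(Y))-Y(\omega(X))-\omega([X,Y]))$. With $N_\varphi(X,Y)=\varphi^2[X,Y]+[\varphi X,\varphi Y]-\varphi[\varphi X,Y]-\varphi[X,\varphi Y]$ and $N=N_\varphi+2\sum_\alpha d\eta^\alpha\otimes\xi_\alpha$, an indefinite $\mathcal{S}$-manifold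 is one with $d\eta^\alpha=\Phi$ for all $\alpha$ and $N=0$. A vector $X$ is lightlike if $g(X,X)=0$. *)

theory Defs
  imports "HOL-Analysis.Analysis"
begin

text \<open>Pointwise (tangent-space) model. The tangent space at a point is a finite-dimensional
real vector space 'v; all tensors are evaluated pointwise.\<close>

definition semi_riem_index :: "('v::euclidean_space \<Rightarrow> 'v \<Rightarrow> real) \<Rightarrow> nat \<Rightarrow> bool" where
  "semi_riem_index g \<nu> \<longleftrightarrow>
     (\<exists>W. subspace W \<and> dim W = \<nu> \<and> (\<forall>w\<in>W. w \<noteq> 0 \<longrightarrow> g w w < 0)) \<and>
     (\<forall>W. subspace W \<and> (\<forall>w\<in>W. w \<noteq> 0 \<longrightarrow> g w w < 0) \<longrightarrow> dim W \<le> \<nu>)"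

definition semi_riemannian :: "('v::euclidean_space \<Rightarrow> 'v \<Rightarrow> real) \<Rightarrow> nat \<Rightarrow> bool" where
  "semi_riemannian g \<nu> \<longleftrightarrow> bilinear g \<and> (\<forall>x y. g x y = g y x) \<and>
     (\<forall>x. (\<forall>y. g x y = 0) \<longrightarrow> x = 0) \<and> semi_riem_index g \<nu>"

definition indef_metric_gff ::
  "nat \<Rightarrow> nat \<Rightarrow> ('v::euclidean_space \<Rightarrow> 'v) \<Rightarrow> (nat \<Rightarrow> 'v) \<Rightarrow> (nat \<Rightarrow> 'v \<Rightarrow> real)
    \<Rightarrow> ('v \<Rightarrow> 'v \<Rightarrow> real) \<Rightarrow> nat \<Rightarrow> bool" where
  "indef_metric_gff n r \<phi> \<xi> \<eta> g \<nu> \<longleftrightarrow>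
     1 \<le> r \<and> DIM('v) = 2*n + r \<and>
     linear \<phi> \<and> dim (range \<phi>) = 2*n \<and> (\<forall>x. \<phi> (\<phi> (\<phi> x)) + \<phi> x = 0) \<and>
     (\<forall>a\<in>{1..r}. linear (\<eta> a)) \<and>
     semi_riemannian g \<nu> \<and> 0 < \<nu> \<and> \<nu> < 2*n + r \<and>
     (\<forall>x. \<phi> (\<phi> x) = - x + (\<Sum>a=1..r. \<eta> a x *\<^sub>R \<xi> a)) \<and>
     (\<forall>a\<in>{1..r}. \<forall>b\<in>{1..r}. \<eta> a (\<xi> b) = (if a = b then 1 else 0)) \<and>
     (\<forall>a\<in>{1..r}. g (\<xi> a) (\<xi> a) = 1 \<or> g (\<xi> a) (\<xi> a) = -1) \<and>
     (\<forall>x y. g (\<phi> x) (\<phi> y) = g x y - (\<Sum>a=1..r. g (\<xi> a) (\<xi> a) * \<eta> a x * \<eta> a y)) \<and>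
     (\<forall>a\<in>{1..r}. \<forall>x. g (\<xi> a) (\<xi> a) * g x (\<xi> a) = \<eta> a x)"

definition fund_form :: "('v \<Rightarrow> 'v) \<Rightarrow> ('v \<Rightarrow> 'v \<Rightarrow> real) \<Rightarrow> 'v \<Rightarrow> 'v \<Rightarrow> real" where
  "fund_form \<phi> g x y = g x (\<phi> y)"

definition P_tensor :: "('v \<Rightarrow> 'v) \<Rightarrow> ('v \<Rightarrow> 'v \<Rightarrow> real) \<Rightarrow> 'v \<Rightarrow> 'v \<Rightarrow> 'v \<Rightarrow> 'v \<Rightarrow> real" where
  "P_tensor \<phi> g X Y Z W =
     fund_form \<phi> g X Z * g Y W - fund_form \<phi> g X W * g Y Z
     - fund_form \<phi> g Y Z * g X W + fund_form \<phi> g Y W * g X Z"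

definition multilinear4 :: "('v::real_vector \<Rightarrow> 'v \<Rightarrow> 'v \<Rightarrow> 'v \<Rightarrow> real) \<Rightarrow> bool" where
  "multilinear4 U \<longleftrightarrow>
     (\<forall>y z w. linear (\<lambda>x. U x y z w)) \<and> (\<forall>x z w. linear (\<lambda>y. U x y z w)) \<and>
     (\<forall>x y w. linear (\<lambda>z. U x y z w)) \<and> (\<forall>x y z. linear (\<lambda>w. U x y z w))"

definition curv_like :: "nat \<Rightarrow> ('v::euclidean_space \<Rightarrow> 'v) \<Rightarrow> (nat \<Rightarrow> 'v) \<Rightarrow> ('v \<Rightarrow> 'v \<Rightarrow> real)
    \<Rightarrow> ('v \<Rightarrow> 'v \<Rightarrow> 'v \<Rightarrow> 'v \<Rightarrow> real) \<Rightarrow> bool" where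
  "curv_like r \<phi> \<xi> g U \<longleftrightarrow> multilinear4 U \<and>
     (\<forall>X Y Z W. U X Y Z W = - U Y X Z W) \<and>
     (\<forall>X Y Z W. U X Y Z W = - U X Y W Z) \<and>
     (\<forall>X Y Z W. U X Y Z W = U Z W X Y) \<and>
     (\<forall>X Y Z W. U X Y Z W + U X Z W Y + U X W Y Z = 0) \<and>
     (\<forall>X\<in>range \<phi>. \<forall>Y\<in>range \<phi>. \<forall>Z\<in>range \<phi>. \<forall>W\<in>range \<phi>.
        U X Y (\<phi> Z) W + U X Y Z (\<phi> W) =
        (\<Sum>a=1..r. g (\<xi> a) (\<xi> a)) * P_tensor \<phi> g X Y Z W)"

end

theory Submission imports Defs begin

lemma ml_rules:
  assumes "multilinear4 U"
  shows "U (x + x') y z w = U x y z w + U x' y z w"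
    and "U x (y + y') z w = U x y z w + U x y' z w"
    and "U x y (z + z') w = U x y z w + U x y z' w"
    and "U x y z (w + w') = U x y z w + U x y z w'"
    and "U (x - x') y z w = U x y z w - U x' y z w"
    and "U x (y - y') z w = U x y z w - U x y' z w"
    and "U x y (z - z') w = U x y z w - U x y z' w"
    and "U x y z (w - w') = U x y z w - U x y z w'"
    and "U (c *\<^sub>R x) y z w = c * U x y z w"
    and "U x (c *\<^sub>R y) z w = c * U x y z w"
    and "U x y (c *\<^sub>R z) w = c * U x y z w"
    and "U x y z (c *\<^sub>R w) = c * U x y z w"
    and "U (- x) y z w = - U x y z w"
    and "U x (- y) z w = - U x y z w"
    and "U x y (- z) w = - U x y z w"
    and "U x y z (- w) = - U x y z w"
    and "U 0 y z w = 0" and "U x 0 z w = 0" and "U x y 0 w = 0" and "U x y z 0 = 0"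
proof -
  have l1: "linear (\<lambda>x. U x y z w)" for y z w using assms unfolding multilinear4_def by blast
  have l2: "linear (\<lambda>y. U x y z w)" for x z w using assms unfolding multilinear4_def by blast
  have l3: "linear (\<lambda>z. U x y z w)" for x y w using assms unfolding multilinear4_def by blast
  have l4: "linear (\<lambda>w. U x y z w)" for x y z using assms unfolding multilinear4_def by blast
  show "U (x + x') y z w = U x y z w + U x' y z w" using linear_add[OF l1] .
  show "U x (y + y') z w = U x y z w + U x y' z w" using linear_add[OF l2] .
  show "U x y (z + z') w = U x y z w + U x y z' w" using linear_add[OF l3] .
  show "U x y z (w + w') = U x y z w + U x y z w'" using linear_add[OF l4] .
  show "U (x - x') y z w = U x y z w - U x' y z w" using linear_diff[OF l1] .
  show "U x (y - y') z w = U x y z w - U x y' z w" using linear_diff[OF l2] .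
  show "U x y (z - z') w = U x y z w - U x y z' w" using linear_diff[OF l3] .
  show "U x y z (w - w') = U x y z w - U x y z w'" using linear_diff[OF l4] .
  show "U (c *\<^sub>R x) y z w = c * U x y z w" using linear_scale[OF l1] by simp
  show "U x (c *\<^sub>R y) z w = c * U x y z w" using linear_scale[OF l2] by simp
  show "U x y (c *\<^sub>R z) w = c * U x y z w" using linear_scale[OF l3] by simp
  show "U x y z (c *\<^sub>R w) = c * U x y z w" using linear_scale[OF l4] by simp
  show "U (- x) y z w = - U x y z w" using linear_neg[OF l1] .
  show "U x (- y) z w = - U x y z w" using linear_neg[OF l2] .
  show "U x y (- z) w = - U x y z w" using linear_neg[OF l3] .
  show "U x y z (- w) = - U x y z w" using linear_neg[OF l4] .
  show "U 0 y z w = 0" using linear_0[OF l1] .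
  show "U x 0 z w = 0" using linear_0[OF l2] .
  show "U x y 0 w = 0" using linear_0[OF l3] .
  show "U x y z 0 = 0" using linear_0[OF l4] .
qed

lemma core:
  fixes U :: "'v::real_vector \<Rightarrow> 'v \<Rightarrow> 'v \<Rightarrow> 'v \<Rightarrow> real" and J :: "'v \<Rightarrow> 'v"
  assumes ml: "multilinear4 U" and lin: "linear J" and J3: "\<forall>x. J (J (J x)) + J x = 0"
    and a1: "\<forall>X Y Z W. U X Y Z W = - U Y X Z W"
    and a2: "\<forall>X Y Z W. U X Y Z W = - U X Y W Z"
    and ps: "\<forall>X Y Z W. U X Y Z W = U Z W X Y"
    and bi: "\<forall>X Y Z W. U X Y Z W + U X Z W Y + U X W Y Z = 0"
    and jp: "\<forall>X\<in>range J. \<forall>Y\<in>range J. \<forall>Z\<in>range J. \<forall>W\<in>range J. U X Y (J Z) W + U X Y Z (J W) = 0"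
    and h: "\<forall>X\<in>range J. U X (J X) X (J X) = 0"
  shows "\<forall>X\<in>range J. \<forall>Y\<in>range J. \<forall>Z\<in>range J. \<forall>W\<in>range J. U X Y Z W = 0"
proof -
  note R = ml_rules[OF ml]
  have Vadd: "x + y \<in> range J" if "x \<in> range J" "y \<in> range J" for x y
  proof -
    obtain u v where "x = J u" "y = J v" using \<open>x \<in> range J\<close> \<open>y \<in> range J\<close> by blast
    then have "x + y = J (u + v)" using linear_add[OF lin] by simp
    then show ?thesis by simp
  qed
  have Vdiff: "x - y \<in> range J" if "x \<in> range J" "y \<in> range J" for x y
  proof -
    obtain u v where "x = J u" "y = J v" using \<open>x \<in> range J\<close> \<open>y \<in> range J\<close> by blast
    then have "x - y = J (u - v)" using linear_diff[OF lin] by simp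
    then show ?thesis by simp
  qed
  have VJ: "J x \<in> range J" for x by simp
  have JJ: "J (J x) = - x" if "x \<in> range J" for x
  proof -
    obtain u where u: "x = J u" using \<open>x \<in> range J\<close> by blast
    have "J (J (J u)) + J u = 0" using J3 by blast
    then show ?thesis using u by (simp add: eq_neg_iff_add_eq_0)
  qed
  have L2: "U a b (J c) d = - U a b c (J d)" if "a \<in> range J" "b \<in> range J" "c \<in> range J" "d \<in> range J" for a b c d
  proof -
    have "U a b (J c) d + U a b c (J d) = 0" using jp that by blast
    then show ?thesis by linarith
  qed
  have L1: "U (J a) b c d = - U a (J b) c d" if "a \<in> range J" "b \<in> range J" "c \<in> range J" "d \<in> range J" for a b c d
  proof -
    have "U (J a) b c d = U c d (J a) b" using ps by blast
    also have "\<dots> = - U c d a (J b)" using L2[of c d a b] that by blast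
    also have "U c d a (J b) = U a (J b) c d" using ps by blast
    finally show ?thesis .
  qed
  define k where "k X Y = U X Y X Y" for X Y
  define d where "d X Y = U X (J Y) Y (J X)" for X Y
  define ts where "ts X Y = U Y (J Y) X (J X) + U Y (J X) Y (J X) + U Y (J X) X (J Y)
        + U X (J Y) Y (J X) + U X (J Y) X (J Y) + U X (J X) Y (J Y)" for X Y
  define hh where "hh X = U X (J X) X (J X)" for X
  have E1: "hh (X + Y) + hh (X - Y) = 2 * hh X + 2 * hh Y + 2 * ts X Y" for X Y
    unfolding hh_def ts_def linear_add[OF lin] linear_diff[OF lin]
    by (simp only: R) (simp add: algebra_simps)
  have kd: "ts X Y = 2 * k X Y + 6 * d X Y" and t5: "U X (J Y) X (J Y) = d X Y"
    and kd2: "U X Y (J X) (J Y) = k X Y"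
    if X: "X \<in> range J" and Y: "Y \<in> range J" for X Y
  proof -
    have t1: "U Y (J Y) X (J X) = U X (J X) Y (J Y)" using ps by blast
    have b: "U X (J X) Y (J Y) + U X Y (J Y) (J X) + U X (J Y) (J X) Y = 0" using bi by blast
    have b1: "U X Y (J Y) (J X) = - U X Y (J X) (J Y)" using a2 by blast
    have b2: "U X Y (J X) (J Y) = - U X Y X (J (J Y))" using L2[OF X Y X VJ] .
    have b3: "U X (J Y) (J X) Y = - U X (J Y) Y (J X)" using a2 by blast
    have t2a: "U (J (J Y)) (J X) Y (J X) = - U (J Y) (J (J X)) Y (J X)" using L1[OF VJ VJ Y VJ] .
    have t2b: "U (J Y) X Y (J X) = - U X (J Y) Y (J X)" using a1 by blast
    have t3: "U Y (J X) X (J Y) = U X (J Y) Y (J X)" using ps by blast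
    have t5a: "U (J (J X)) (J Y) X (J Y) = - U (J X) (J (J Y)) X (J Y)" using L1[OF VJ VJ X VJ] .
    have t5b: "U (J X) Y X (J Y) = - U Y (J X) X (J Y)" using a1 by blast
    show "U X Y (J X) (J Y) = k X Y" using b2 JJ[OF Y] by (simp add: R k_def)
    show "ts X Y = 2 * k X Y + 6 * d X Y"
      using t1 b b1 b2 b3 t2a t2b t3 t5a t5b JJ[OF X] JJ[OF Y]
      unfolding ts_def k_def d_def by (simp add: R)
    show "U X (J Y) X (J Y) = d X Y"
      using t5a t5b t3 JJ[OF X] JJ[OF Y] unfolding d_def by (simp add: R)
  qed
  have k0: "k X Y = 0" if X: "X \<in> range J" and Y: "Y \<in> range J" for X Y
  proof -
    have h0: "hh v = 0" if "v \<in> range J" for v using h that unfolding hh_def by blast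
    have e1: "ts X Y = 0" using E1[of X Y] h0[OF X] h0[OF Y] h0[OF Vadd[OF X Y]] h0[OF Vdiff[OF X Y]] by simp
    have e2: "ts X (J Y) = 0" using E1[of X "J Y"] h0[OF X] h0[OF VJ] h0[OF Vadd[OF X VJ]] h0[OF Vdiff[OF X VJ]] by simp
    have "ts X (J Y) = 2 * d X Y + 6 * k X Y"
    proof -
      have "ts X (J Y) = 2 * k X (J Y) + 6 * d X (J Y)" using kd[OF X VJ] .
      moreover have "k X (J Y) = d X Y" using t5[OF X Y] unfolding k_def .
      moreover have "d X (J Y) = k X Y"
      proof -
        have "d X (J Y) = U X (- Y) (J Y) (J X)" unfolding d_def using JJ[OF Y] by simp
        also have "\<dots> = U X Y (J X) (J Y)" using a2[rule_format, of X Y "J Y" "J X"] by (simp add: R)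
        finally show ?thesis using kd2[OF X Y] by simp
      qed
      ultimately show ?thesis by simp
    qed
    then show ?thesis using e1 e2 kd[OF X Y] by linarith
  qed
  have s2: "U X Y X W = 0" if X: "X \<in> range J" and Y: "Y \<in> range J" and W: "W \<in> range J" for X Y W
  proof -
    have "k X (Y + W) = 0" using k0[OF X Vadd[OF Y W]] .
    moreover have "U X W X Y = U X Y X W" using ps by blast
    ultimately show ?thesis using k0[OF X Y] k0[OF X W] unfolding k_def by (simp add: R)
  qed
  have m: "U X Y Z W + U Z Y X W = 0" if X: "X \<in> range J" and Y: "Y \<in> range J"
      and Z: "Z \<in> range J" and W: "W \<in> range J" for X Y Z W
    using s2[OF Vadd[OF X Z] Y W] s2[OF X Y W] s2[OF Z Y W] by (simp add: R)
  show ?thesis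
  proof (intro ballI)
    fix X Y Z W assume X: "X \<in> range J" and Y: "Y \<in> range J" and Z: "Z \<in> range J" and W: "W \<in> range J"
    have 1: "U X Y Z W + U X Z W Y + U X W Y Z = 0" using bi by blast
    have 2: "U X Z W Y + U W Z X Y = 0" using m[OF X Z W Y] .
    have 3: "U W Z X Y = U X Y W Z" using ps by blast
    have 4: "U X Y W Z = - U X Y Z W" using a2 by blast
    have 5: "U X W Y Z + U Y W X Z = 0" using m[OF X W Y Z] .
    have 6: "U Y W X Z = U X Z Y W" using ps by blast
    have 7: "U X Z Y W = - U X Z W Y" using a2 by blast
    from 1 2 3 4 5 6 7 show "U X Y Z W = 0" by linarith
  qed
qed


lemma ml_cont:
  assumes "multilinear4 U"
  shows "isCont (\<lambda>t::real. U (a + t *\<^sub>R b) (c + t *\<^sub>R d) (e + t *\<^sub>R f) (h + t *\<^sub>R k)) t0"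
  by (simp add: ml_rules[OF assms])

theorem mainTheorem16:
  fixes n r :: nat and \<nu> :: nat
    and \<phi> :: "'v::euclidean_space \<Rightarrow> 'v" and \<xi> :: "nat \<Rightarrow> 'v" and \<eta> :: "nat \<Rightarrow> 'v \<Rightarrow> real"
    and g :: "'v \<Rightarrow> 'v \<Rightarrow> real"
    and T S :: "'v \<Rightarrow> 'v \<Rightarrow> 'v \<Rightarrow> 'v \<Rightarrow> real"
  assumes str: "indef_metric_gff n r \<phi> \<xi> \<eta> g \<nu>"
    and T: "curv_like r \<phi> \<xi> g T" and S: "curv_like r \<phi> \<xi> g S"
    and va: "\<forall>X\<in>range \<phi>. \<forall>Y\<in>range \<phi>. \<forall>a\<in>{1..r}. T X (\<xi> a) X Y = S X (\<xi> a) X Y"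
    and vb: "\<forall>X\<in>range \<phi>. \<forall>Y\<in>range \<phi>. \<forall>a\<in>{1..r}. \<forall>b\<in>{1..r}.
               T (\<xi> a) X (\<xi> b) Y = S (\<xi> a) X (\<xi> b) Y"
    and vc: "\<forall>X\<in>range \<phi>. \<forall>a\<in>{1..r}. \<forall>b\<in>{1..r}. \<forall>c\<in>{1..r}.
               T (\<xi> a) X (\<xi> b) (\<xi> c) = S (\<xi> a) X (\<xi> b) (\<xi> c)"
    and vd: "\<forall>a\<in>{1..r}. \<forall>b\<in>{1..r}. \<forall>c\<in>{1..r}. \<forall>d\<in>{1..r}.
               T (\<xi> a) (\<xi> b) (\<xi> c) (\<xi> d) = S (\<xi> a) (\<xi> b) (\<xi> c) (\<xi> d)"
    and hol: "\<forall>X\<in>range \<phi>. g X X \<noteq> 0 \<longrightarrow> T X (\<phi> X) X (\<phi> X) = S X (\<phi> X) X (\<phi> X)"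
  shows "T = S"
proof -
  have lin: "linear \<phi>" using str unfolding indef_metric_gff_def by (elim conjE) assumption
  have J3: "\<forall>x. \<phi> (\<phi> (\<phi> x)) + \<phi> x = 0" using str unfolding indef_metric_gff_def by (elim conjE) assumption
  have lineta: "\<forall>a\<in>{1..r}. linear (\<eta> a)" using str unfolding indef_metric_gff_def by (elim conjE) assumption
  have sr: "semi_riemannian g \<nu>" using str unfolding indef_metric_gff_def by (elim conjE) assumption
  have phi2: "\<forall>x. \<phi> (\<phi> x) = - x + (\<Sum>a=1..r. \<eta> a x *\<^sub>R \<xi> a)"
    using str unfolding indef_metric_gff_def by (elim conjE) assumption
  have etaxi: "\<forall>a\<in>{1..r}. \<forall>b\<in>{1..r}. \<eta> a (\<xi> b) = (if a = b then 1 else 0)"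
    using str unfolding indef_metric_gff_def by (elim conjE) assumption
  have eps: "\<forall>a\<in>{1..r}. g (\<xi> a) (\<xi> a) = 1 \<or> g (\<xi> a) (\<xi> a) = -1"
    using str unfolding indef_metric_gff_def by (elim conjE) assumption
  have gxi: "\<forall>a\<in>{1..r}. \<forall>x. g (\<xi> a) (\<xi> a) * g x (\<xi> a) = \<eta> a x"
    using str unfolding indef_metric_gff_def by (elim conjE) assumption
  have bil: "bilinear g" using sr unfolding semi_riemannian_def by (elim conjE) assumption
  have gsym: "\<forall>x y. g x y = g y x" using sr unfolding semi_riemannian_def by (elim conjE) assumption
  have nondeg: "\<forall>x. (\<forall>y. g x y = 0) \<longrightarrow> x = 0" using sr unfolding semi_riemannian_def by (elim conjE) assumption
  have linl: "linear (\<lambda>x. g x y)" for y using bil unfolding bilinear_def by blast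
  have linr: "linear (g x)" for x using bil unfolding bilinear_def by blast
  define D where "D = (\<lambda>x y z w. T x y z w - S x y z w)"
  have mlT: "multilinear4 T" using T unfolding curv_like_def by (elim conjE) assumption
  have mlS: "multilinear4 S" using S unfolding curv_like_def by (elim conjE) assumption
  have mlD: "multilinear4 D"
    using mlT mlS unfolding multilinear4_def D_def by (auto intro: linear_compose_sub)
  note R = ml_rules[OF mlD]
  have a1D: "\<forall>X Y Z W. D X Y Z W = - D Y X Z W"
  proof (intro allI)
    fix X Y Z W
    have t: "\<forall>X Y Z W. T X Y Z W = - T Y X Z W" using T unfolding curv_like_def by (elim conjE) assumption
    have s: "\<forall>X Y Z W. S X Y Z W = - S Y X Z W" using S unfolding curv_like_def by (elim conjE) assumption
    show "D X Y Z W = - D Y X Z W" using t[rule_format, of X Y Z W] s[rule_format, of X Y Z W] unfolding D_def by simp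
  qed
  have a2D: "\<forall>X Y Z W. D X Y Z W = - D X Y W Z"
  proof (intro allI)
    fix X Y Z W
    have t: "\<forall>X Y Z W. T X Y Z W = - T X Y W Z" using T unfolding curv_like_def by (elim conjE) assumption
    have s: "\<forall>X Y Z W. S X Y Z W = - S X Y W Z" using S unfolding curv_like_def by (elim conjE) assumption
    show "D X Y Z W = - D X Y W Z" using t[rule_format, of X Y Z W] s[rule_format, of X Y Z W] unfolding D_def by simp
  qed
  have psD: "\<forall>X Y Z W. D X Y Z W = D Z W X Y"
  proof (intro allI)
    fix X Y Z W
    have t: "\<forall>X Y Z W. T X Y Z W = T Z W X Y" using T unfolding curv_like_def by (elim conjE) assumption
    have s: "\<forall>X Y Z W. S X Y Z W = S Z W X Y" using S unfolding curv_like_def by (elim conjE) assumption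
    show "D X Y Z W = D Z W X Y" using t[rule_format, of X Y Z W] s[rule_format, of X Y Z W] unfolding D_def by simp
  qed
  have biD: "\<forall>X Y Z W. D X Y Z W + D X Z W Y + D X W Y Z = 0"
  proof (intro allI)
    fix X Y Z W
    have "\<forall>X Y Z W. T X Y Z W + T X Z W Y + T X W Y Z = 0" using T unfolding curv_like_def by (elim conjE) assumption
    moreover have "\<forall>X Y Z W. S X Y Z W + S X Z W Y + S X W Y Z = 0" using S unfolding curv_like_def by (elim conjE) assumption
    ultimately have "T X Y Z W + T X Z W Y + T X W Y Z = 0" "S X Y Z W + S X Z W Y + S X W Y Z = 0" by blast+
    then show "D X Y Z W + D X Z W Y + D X W Y Z = 0" unfolding D_def by linarith
  qed
  have jpD: "\<forall>X\<in>range \<phi>. \<forall>Y\<in>range \<phi>. \<forall>Z\<in>range \<phi>. \<forall>W\<in>range \<phi>. D X Y (\<phi> Z) W + D X Y Z (\<phi> W) = 0"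
  proof (intro ballI)
    fix X Y Z W assume h: "X \<in> range \<phi>" "Y \<in> range \<phi>" "Z \<in> range \<phi>" "W \<in> range \<phi>"
    have "T X Y (\<phi> Z) W + T X Y Z (\<phi> W) = (\<Sum>a=1..r. g (\<xi> a) (\<xi> a)) * P_tensor \<phi> g X Y Z W"
    proof -
      have j: "\<forall>X\<in>range \<phi>. \<forall>Y\<in>range \<phi>. \<forall>Z\<in>range \<phi>. \<forall>W\<in>range \<phi>.
        T X Y (\<phi> Z) W + T X Y Z (\<phi> W) = (\<Sum>a=1..r. g (\<xi> a) (\<xi> a)) * P_tensor \<phi> g X Y Z W"
        using T unfolding curv_like_def by (elim conjE) assumption
      show ?thesis using j[rule_format, OF h] .
    qed
    moreover have "S X Y (\<phi> Z) W + S X Y Z (\<phi> W) = (\<Sum>a=1..r. g (\<xi> a) (\<xi> a)) * P_tensor \<phi> g X Y Z W"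
    proof -
      have j: "\<forall>X\<in>range \<phi>. \<forall>Y\<in>range \<phi>. \<forall>Z\<in>range \<phi>. \<forall>W\<in>range \<phi>.
        S X Y (\<phi> Z) W + S X Y Z (\<phi> W) = (\<Sum>a=1..r. g (\<xi> a) (\<xi> a)) * P_tensor \<phi> g X Y Z W"
        using S unfolding curv_like_def by (elim conjE) assumption
      show ?thesis using j[rule_format, OF h] .
    qed
    ultimately show "D X Y (\<phi> Z) W + D X Y Z (\<phi> W) = 0" unfolding D_def by linarith
  qed
  have etaphi: "\<eta> a (\<phi> u) = 0" if a: "a \<in> {1..r}" for a u
  proof -
    have "\<phi> (\<phi> (\<phi> u)) = - \<phi> u + (\<Sum>b=1..r. \<eta> b (\<phi> u) *\<^sub>R \<xi> b)" using phi2 by blast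
    moreover have "\<phi> (\<phi> (\<phi> u)) = - \<phi> u" using J3 by (simp add: eq_neg_iff_add_eq_0)
    ultimately have s0: "(\<Sum>b=1..r. \<eta> b (\<phi> u) *\<^sub>R \<xi> b) = 0" by simp
    have la: "linear (\<eta> a)" using lineta a by blast
    have "\<eta> a (\<Sum>b=1..r. \<eta> b (\<phi> u) *\<^sub>R \<xi> b) = (\<Sum>b=1..r. \<eta> b (\<phi> u) * \<eta> a (\<xi> b))"
      by (simp add: linear_sum[OF la] linear_scale[OF la])
    also have "\<dots> = (\<Sum>b=1..r. if b = a then \<eta> b (\<phi> u) else 0)"
      by (rule sum.cong) (use etaxi a in auto)
    also have "\<dots> = \<eta> a (\<phi> u)" using a by simp
    finally show ?thesis using s0 linear_0[OF la] by simp
  qed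
  have hD: "\<forall>X\<in>range \<phi>. g X X \<noteq> 0 \<longrightarrow> D X (\<phi> X) X (\<phi> X) = 0" using hol unfolding D_def by simp
  have hfull: "\<forall>X\<in>range \<phi>. D X (\<phi> X) X (\<phi> X) = 0"
  proof
    fix X assume X: "X \<in> range \<phi>"
    show "D X (\<phi> X) X (\<phi> X) = 0"
    proof (cases "g X X = 0")
      case False then show ?thesis using hD X by blast
    next
      case gXX: True
      show ?thesis
      proof (cases "\<exists>Y\<in>range \<phi>. g Y Y \<noteq> 0")
        case True
        then obtain Y where Y: "Y \<in> range \<phi>" and gY: "g Y Y \<noteq> 0" by blast
        define f where "f t = D (X + t *\<^sub>R Y) (\<phi> X + t *\<^sub>R \<phi> Y) (X + t *\<^sub>R Y) (\<phi> X + t *\<^sub>R \<phi> Y)" for t :: real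
        have cont: "isCont f 0" unfolding f_def by (rule ml_cont[OF mlD])
        define c where "c = - 2 * g X Y / g Y Y"
        have ev: "eventually (\<lambda>t. f t = 0) (at 0)"
          unfolding eventually_at
        proof (intro exI[of _ "if c = 0 then 1 else \<bar>c\<bar>"] conjI ballI impI)
          show "0 < (if c = 0 then 1 else \<bar>c\<bar>)" by simp
          fix t :: real assume t: "t \<noteq> 0 \<and> dist t 0 < (if c = 0 then 1 else \<bar>c\<bar>)"
          have tc: "t \<noteq> c" using t by (auto split: if_splits)
          have "2 * g X Y + t * g Y Y \<noteq> 0"
          proof
            assume "2 * g X Y + t * g Y Y = 0"
            then have "t = c" unfolding c_def using gY by (simp add: field_simps)
            then show False using tc by simp
          qed
          then have q: "t * (2 * g X Y + t * g Y Y) \<noteq> 0" using t by simp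
          have "g (X + t *\<^sub>R Y) (X + t *\<^sub>R Y) = g X X + t * g X Y + t * g Y X + t * t * g Y Y"
            by (simp add: linear_add[OF linr] linear_add[OF linl] linear_scale[OF linr] linear_scale[OF linl] algebra_simps)
          also have "\<dots> = t * (2 * g X Y + t * g Y Y)" using gXX gsym by (simp add: algebra_simps)
          finally have gn: "g (X + t *\<^sub>R Y) (X + t *\<^sub>R Y) \<noteq> 0" using q by simp
          obtain u v where uv: "X = \<phi> u" "Y = \<phi> v" using X Y by blast
          have mem: "X + t *\<^sub>R Y \<in> range \<phi>"
            using uv linear_add[OF lin] linear_scale[OF lin] by (metis rangeI)
          have phit: "\<phi> (X + t *\<^sub>R Y) = \<phi> X + t *\<^sub>R \<phi> Y"
            by (simp add: linear_add[OF lin] linear_scale[OF lin])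
          show "f t = 0" unfolding f_def using hD mem gn phit by metis
        qed
        have l1: "(f \<longlongrightarrow> f 0) (at 0)" using cont by (simp add: isCont_def)
        have l2: "(f \<longlongrightarrow> 0) (at 0)" using tendsto_eventually[OF ev] by simp
        have "f 0 = 0" using tendsto_unique[OF at_neq_bot l1 l2] .
        then show ?thesis unfolding f_def by simp
      next
        case False
        then have allL: "\<forall>Y\<in>range \<phi>. g Y Y = 0" by blast
        have gD: "g X Y = 0" if Y: "Y \<in> range \<phi>" for Y
        proof -
          obtain u v where uv: "X = \<phi> u" "Y = \<phi> v" using X Y by blast
          have mem: "X + Y \<in> range \<phi>"
            using uv linear_add[OF lin] by (metis rangeI)
          have "g (X + Y) (X + Y) = g X X + g X Y + g Y X + g Y Y"
            by (simp add: linear_add[OF linr] linear_add[OF linl] algebra_simps)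
          then show ?thesis using allL mem Y X gsym by (metis add.left_neutral mult_2 mult_eq_0_iff zero_neq_numeral add_cancel_right_left)
        qed
        have gxi0: "g X (\<xi> b) = 0" if b: "b \<in> {1..r}" for b
        proof -
          obtain u where u: "X = \<phi> u" using X by blast
          have "g (\<xi> b) (\<xi> b) * g X (\<xi> b) = 0" using gxi b etaphi[OF b, of u] u by simp
          moreover have "g (\<xi> b) (\<xi> b) \<noteq> 0" using eps b by force
          ultimately show ?thesis by simp
        qed
        have "\<forall>v. g X v = 0"
        proof
          fix v
          have dec: "v = (\<Sum>a=1..r. \<eta> a v *\<^sub>R \<xi> a) - \<phi> (\<phi> v)" using phi2 by (metis add_diff_cancel_left' diff_minus_eq_add minus_minus add.commute)
          have "g X v = g X (\<Sum>a=1..r. \<eta> a v *\<^sub>R \<xi> a) - g X (\<phi> (\<phi> v))"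
            by (subst dec) (simp add: linear_diff[OF linr])
          also have "g X (\<Sum>a=1..r. \<eta> a v *\<^sub>R \<xi> a) = (\<Sum>a=1..r. \<eta> a v * g X (\<xi> a))"
            by (simp add: linear_sum[OF linr] linear_scale[OF linr])
          also have "\<dots> = 0" using gxi0 by simp
          also have "g X (\<phi> (\<phi> v)) = 0" using gD by simp
          finally show "g X v = 0" by simp
        qed
        then have "X = 0" using nondeg by blast
        then show ?thesis by (simp add: R linear_0[OF lin])
      qed
    qed
  qed
  have Z0: "\<forall>X\<in>range \<phi>. \<forall>Y\<in>range \<phi>. \<forall>Z\<in>range \<phi>. \<forall>W\<in>range \<phi>. D X Y Z W = 0"
    by (rule core[OF mlD lin J3 a1D a2D psD biD jpD hfull])
  have vaD: "D X (\<xi> a) X Y = 0" if "X \<in> range \<phi>" "Y \<in> range \<phi>" "a \<in> {1..r}" for X Y a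
    using va[rule_format, OF that] unfolding D_def by simp
  have vbD: "D (\<xi> a) X (\<xi> b) Y = 0" if "X \<in> range \<phi>" "Y \<in> range \<phi>" "a \<in> {1..r}" "b \<in> {1..r}" for X Y a b
    using vb[rule_format, OF that] unfolding D_def by simp
  have vcD: "D (\<xi> a) X (\<xi> b) (\<xi> c) = 0" if "X \<in> range \<phi>" "a \<in> {1..r}" "b \<in> {1..r}" "c \<in> {1..r}" for X a b c
    using vc[rule_format, OF that] unfolding D_def by simp
  have vdD: "D (\<xi> a) (\<xi> b) (\<xi> c) (\<xi> d) = 0" if "a \<in> {1..r}" "b \<in> {1..r}" "c \<in> {1..r}" "d \<in> {1..r}" for a b c d
    using vd[rule_format, OF that] unfolding D_def by simp
  have Vadd: "x + y \<in> range \<phi>" if "x \<in> range \<phi>" "y \<in> range \<phi>" for x y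
  proof -
    obtain u v where "x = \<phi> u" "y = \<phi> v" using \<open>x \<in> range \<phi>\<close> \<open>y \<in> range \<phi>\<close> by blast
    then have "x + y = \<phi> (u + v)" using linear_add[OF lin] by simp
    then show ?thesis by simp
  qed
  have Z1: "D (\<xi> a) X Y Z = 0" if a: "a \<in> {1..r}" and X: "X \<in> range \<phi>" and Y: "Y \<in> range \<phi>" and Z: "Z \<in> range \<phi>" for a X Y Z
  proof -
    have pol: "D (\<xi> a) P Q W + D (\<xi> a) Q P W = 0" if P: "P \<in> range \<phi>" and Q: "Q \<in> range \<phi>" and W: "W \<in> range \<phi>" for P Q W
    proof -
      have "D (P + Q) (\<xi> a) (P + Q) W = 0" using vaD[OF Vadd[OF P Q] W a] .
      then have "D P (\<xi> a) Q W + D Q (\<xi> a) P W = 0" using vaD[OF P W a] vaD[OF Q W a] by (simp add: R)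
      moreover have "D P (\<xi> a) Q W = - D (\<xi> a) P Q W" using a1D by blast
      moreover have "D Q (\<xi> a) P W = - D (\<xi> a) Q P W" using a1D by blast
      ultimately show ?thesis by linarith
    qed
    have 1: "D (\<xi> a) X Y Z + D (\<xi> a) Y Z X + D (\<xi> a) Z X Y = 0" using biD by blast
    have 2: "D (\<xi> a) Y Z X = - D (\<xi> a) Y X Z" using a2D by blast
    have 3: "D (\<xi> a) Y X Z + D (\<xi> a) X Y Z = 0" using pol[OF Y X Z] .
    have 4: "D (\<xi> a) Z X Y + D (\<xi> a) X Z Y = 0" using pol[OF Z X Y] .
    have 5: "D (\<xi> a) X Z Y = - D (\<xi> a) X Y Z" using a2D by blast
    from 1 2 3 4 5 show ?thesis by linarith
  qed
  have Z2: "D (\<xi> a) (\<xi> b) X Y = 0" if a: "a \<in> {1..r}" and b: "b \<in> {1..r}" and X: "X \<in> range \<phi>" and Y: "Y \<in> range \<phi>" for a b X Y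
  proof -
    have 1: "D (\<xi> a) (\<xi> b) X Y + D (\<xi> a) X Y (\<xi> b) + D (\<xi> a) Y (\<xi> b) X = 0" using biD by blast
    have 2: "D (\<xi> a) X Y (\<xi> b) = - D (\<xi> a) X (\<xi> b) Y" using a2D by blast
    from 1 2 vbD[OF X Y a b] vbD[OF Y X a b] show ?thesis by simp
  qed
  note Rg = rangeI[of \<phi>]
  have p: "\<And>u v w z. D (\<phi> u) (\<phi> v) (\<phi> w) (\<phi> z) = 0"
    "\<And>a u v w. a \<in> {1..r} \<Longrightarrow> D (\<xi> a) (\<phi> u) (\<phi> v) (\<phi> w) = 0"
    "\<And>a u v w. a \<in> {1..r} \<Longrightarrow> D (\<phi> u) (\<xi> a) (\<phi> v) (\<phi> w) = 0"
    "\<And>a u v w. a \<in> {1..r} \<Longrightarrow> D (\<phi> u) (\<phi> v) (\<xi> a) (\<phi> w) = 0"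
    "\<And>a u v w. a \<in> {1..r} \<Longrightarrow> D (\<phi> u) (\<phi> v) (\<phi> w) (\<xi> a) = 0"
    "\<And>a b u v. a \<in> {1..r} \<Longrightarrow> b \<in> {1..r} \<Longrightarrow> D (\<xi> a) (\<xi> b) (\<phi> u) (\<phi> v) = 0"
    "\<And>a b u v. a \<in> {1..r} \<Longrightarrow> b \<in> {1..r} \<Longrightarrow> D (\<xi> a) (\<phi> u) (\<xi> b) (\<phi> v) = 0"
    "\<And>a b u v. a \<in> {1..r} \<Longrightarrow> b \<in> {1..r} \<Longrightarrow> D (\<xi> a) (\<phi> u) (\<phi> v) (\<xi> b) = 0"
    "\<And>a b u v. a \<in> {1..r} \<Longrightarrow> b \<in> {1..r} \<Longrightarrow> D (\<phi> u) (\<xi> a) (\<xi> b) (\<phi> v) = 0"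
    "\<And>a b u v. a \<in> {1..r} \<Longrightarrow> b \<in> {1..r} \<Longrightarrow> D (\<phi> u) (\<xi> a) (\<phi> v) (\<xi> b) = 0"
    "\<And>a b u v. a \<in> {1..r} \<Longrightarrow> b \<in> {1..r} \<Longrightarrow> D (\<phi> u) (\<phi> v) (\<xi> a) (\<xi> b) = 0"
    "\<And>a b c u. a \<in> {1..r} \<Longrightarrow> b \<in> {1..r} \<Longrightarrow> c \<in> {1..r} \<Longrightarrow> D (\<xi> a) (\<phi> u) (\<xi> b) (\<xi> c) = 0"
    "\<And>a b c u. a \<in> {1..r} \<Longrightarrow> b \<in> {1..r} \<Longrightarrow> c \<in> {1..r} \<Longrightarrow> D (\<phi> u) (\<xi> a) (\<xi> b) (\<xi> c) = 0"
    "\<And>a b c u. a \<in> {1..r} \<Longrightarrow> b \<in> {1..r} \<Longrightarrow> c \<in> {1..r} \<Longrightarrow> D (\<xi> a) (\<xi> b) (\<xi> c) (\<phi> u) = 0"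
    "\<And>a b c u. a \<in> {1..r} \<Longrightarrow> b \<in> {1..r} \<Longrightarrow> c \<in> {1..r} \<Longrightarrow> D (\<xi> a) (\<xi> b) (\<phi> u) (\<xi> c) = 0"
    "\<And>a b c d. a \<in> {1..r} \<Longrightarrow> b \<in> {1..r} \<Longrightarrow> c \<in> {1..r} \<Longrightarrow> d \<in> {1..r} \<Longrightarrow> D (\<xi> a) (\<xi> b) (\<xi> c) (\<xi> d) = 0"
  proof -
    show "D (\<phi> u) (\<phi> v) (\<phi> w) (\<phi> z) = 0" for u v w z using Z0 by blast
    show 1: "D (\<xi> a) (\<phi> u) (\<phi> v) (\<phi> w) = 0" if "a \<in> {1..r}" for a u v w using Z1[OF that Rg Rg Rg] .
    show "D (\<phi> u) (\<xi> a) (\<phi> v) (\<phi> w) = 0" if "a \<in> {1..r}" for a u v w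
      using a1D[rule_format, of "\<phi> u" "\<xi> a" "\<phi> v" "\<phi> w"] 1[OF that] by simp
    show 3: "D (\<phi> u) (\<phi> v) (\<xi> a) (\<phi> w) = 0" if "a \<in> {1..r}" for a u v w
      using psD[rule_format, of "\<phi> u" "\<phi> v" "\<xi> a" "\<phi> w"] 1[OF that] by simp
    show "D (\<phi> u) (\<phi> v) (\<phi> w) (\<xi> a) = 0" if "a \<in> {1..r}" for a u v w
      using a2D[rule_format, of "\<phi> u" "\<phi> v" "\<phi> w" "\<xi> a"] 3[OF that] by simp
    show 6: "D (\<xi> a) (\<xi> b) (\<phi> u) (\<phi> v) = 0" if "a \<in> {1..r}" "b \<in> {1..r}" for a b u v
      using Z2[OF that Rg Rg] .
    show 7: "D (\<xi> a) (\<phi> u) (\<xi> b) (\<phi> v) = 0" if "a \<in> {1..r}" "b \<in> {1..r}" for a b u v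
      using vbD[OF Rg Rg that] .
    show 8: "D (\<xi> a) (\<phi> u) (\<phi> v) (\<xi> b) = 0" if "a \<in> {1..r}" "b \<in> {1..r}" for a b u v
      using a2D[rule_format, of "\<xi> a" "\<phi> u" "\<phi> v" "\<xi> b"] 7[OF that] by simp
    show "D (\<phi> u) (\<xi> a) (\<xi> b) (\<phi> v) = 0" if "a \<in> {1..r}" "b \<in> {1..r}" for a b u v
      using a1D[rule_format, of "\<phi> u" "\<xi> a" "\<xi> b" "\<phi> v"] 7[OF that] by simp
    show "D (\<phi> u) (\<xi> a) (\<phi> v) (\<xi> b) = 0" if "a \<in> {1..r}" "b \<in> {1..r}" for a b u v
      using a1D[rule_format, of "\<phi> u" "\<xi> a" "\<phi> v" "\<xi> b"] 8[OF that] by simp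
    show "D (\<phi> u) (\<phi> v) (\<xi> a) (\<xi> b) = 0" if "a \<in> {1..r}" "b \<in> {1..r}" for a b u v
      using psD[rule_format, of "\<phi> u" "\<phi> v" "\<xi> a" "\<xi> b"] 6[OF that] by simp
    show 12: "D (\<xi> a) (\<phi> u) (\<xi> b) (\<xi> c) = 0" if "a \<in> {1..r}" "b \<in> {1..r}" "c \<in> {1..r}" for a b c u
      using vcD[OF Rg that] .
    show "D (\<phi> u) (\<xi> a) (\<xi> b) (\<xi> c) = 0" if "a \<in> {1..r}" "b \<in> {1..r}" "c \<in> {1..r}" for a b c u
      using a1D[rule_format, of "\<phi> u" "\<xi> a" "\<xi> b" "\<xi> c"] 12[OF that] by simp
    show 14: "D (\<xi> a) (\<xi> b) (\<xi> c) (\<phi> u) = 0" if "a \<in> {1..r}" "b \<in> {1..r}" "c \<in> {1..r}" for a b c u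
      using psD[rule_format, of "\<xi> a" "\<xi> b" "\<xi> c" "\<phi> u"] 12[OF that(3) that(1) that(2)] by simp
    show "D (\<xi> a) (\<xi> b) (\<phi> u) (\<xi> c) = 0" if "a \<in> {1..r}" "b \<in> {1..r}" "c \<in> {1..r}" for a b c u
      using a2D[rule_format, of "\<xi> a" "\<xi> b" "\<phi> u" "\<xi> c"] 14[OF that] by simp
    show "D (\<xi> a) (\<xi> b) (\<xi> c) (\<xi> d) = 0" if "a \<in> {1..r}" "b \<in> {1..r}" "c \<in> {1..r}" "d \<in> {1..r}" for a b c d
      using vdD[OF that] .
  qed
  define B where "B = range \<phi> \<union> \<xi> ` {1..r}"
  have allB: "D x y z w = 0" if "x \<in> B" "y \<in> B" "z \<in> B" "w \<in> B" for x y z w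
    using that unfolding B_def by (auto simp add: p)
  have spanB: "x \<in> span B" for x
  proof -
    have dec: "x = (\<Sum>a=1..r. \<eta> a x *\<^sub>R \<xi> a) + \<phi> (- \<phi> x)"
      using phi2 linear_neg[OF lin] by (metis add.commute add_diff_cancel_left' diff_minus_eq_add minus_minus)
    have "(\<Sum>a=1..r. \<eta> a x *\<^sub>R \<xi> a) \<in> span B"
      by (intro span_sum span_scale span_base) (auto simp: B_def)
    moreover have "\<phi> (- \<phi> x) \<in> span B" by (intro span_base) (auto simp: B_def)
    ultimately show ?thesis by (subst dec) (rule span_add)
  qed
  have lx: "linear (\<lambda>x. D x y z w)" for y z w using mlD unfolding multilinear4_def by blast
  have ly: "linear (\<lambda>y. D x y z w)" for x z w using mlD unfolding multilinear4_def by blast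
  have lz: "linear (\<lambda>z. D x y z w)" for x y w using mlD unfolding multilinear4_def by blast
  have lw: "linear (\<lambda>w. D x y z w)" for x y z using mlD unfolding multilinear4_def by blast
  have s1: "D x y z w = 0" if "y \<in> B" "z \<in> B" "w \<in> B" for x y z w
    using linear_eq_0_on_span[OF lx, of B, OF _ spanB] allB that by blast
  have s2: "D x y z w = 0" if "z \<in> B" "w \<in> B" for x y z w
    using linear_eq_0_on_span[OF ly, of B, OF _ spanB] s1 that by blast
  have s3: "D x y z w = 0" if "w \<in> B" for x y z w
    using linear_eq_0_on_span[OF lz, of B, OF _ spanB] s2 that by blast
  have s4: "D x y z w = 0" for x y z w
    using linear_eq_0_on_span[OF lw, of B, OF _ spanB] s3 by blast
  show "T = S"
  proof (intro ext)
    fix x y z w show "T x y z w = S x y z w" using s4[of x y z w] unfolding D_def by simp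
  qed
qed

end
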